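(* Let $f$ be a ternary cubic form such that $4\theta_{3311}\theta_{3322}-\theta_{3312}^2\neq0$. Then $f$ is completely reducible (a product of three linear forms) if and only if the following three equations hold: $$\Delta_{122}\theta_{3311}-\Delta_{112}\theta_{3312}+3\Delta_{111}\theta_{3322}=0,$$ $$3\Delta_{222}\theta_{3311}-\Delta_{122}\theta_{3312}+\Delta_{112}\theta_{3322}=0,$$ $$\Delta_{122}\theta_{1311}-\Delta_{112}\theta_{1312}+3\Delta_{111}\theta_{1322}+3\Delta_{222}\theta_{2311}-\Delta_{122}\theta_{2312}+\Delta_{112}\theta_{2322}-4\Delta_{223}\theta_{3311}+2\Delta_{123}\theta_{3312}-4\Delta_{113}\theta_{3322}=0.$$
   Context: Forms have complex coefficients in $x=(x_1,x_2,x_3)$; $u=(u_1,u_2,u_3)$ are indeterminates with $u_x=\sum u_ix_i$. The second transvectant is $J^2[f,g,h]=\big(\Omega^2(f(x)g(y)h(z))\big)|_{y=z=x}$, where $\Omega$ is the determinant of the operator matrix with rows $(\partial/\partial x_i)$, $(\partial/\partial y_i)$, $(\partial/\partial z_i)$, and $u$ is treated as constant. For a ternary cubic $f$, let $\Delta=\tfrac1{12}J^2[f,f,f]$ (the Hessian, equal to $\tfrac12\det(\partial^2f/\partial x_i\partial x_j)$), and write $\Delta_{ijk}$ ($i\le j\le k$) for its coefficient of $x_ix_jx_k$. Let $\theta=\tfrac14J^2[f,f,u_x^2]$, and write $\theta_{ijkl}$ ($i\le j$, $k\le l$) for its coefficient of $u_iu_jx_kx_l$. *)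

theory Defs
  imports "HOL-Analysis.Analysis" "HOL-Combinatorics.Permutations"
begin

text \<open>Points of C^3 are represented as functions nat => complex; only the
  coordinates 1, 2, 3 are used.\<close>

definition pd :: "nat \<Rightarrow> ((nat \<Rightarrow> complex) \<Rightarrow> complex) \<Rightarrow> (nat \<Rightarrow> complex) \<Rightarrow> complex" where
  "pd i g x = deriv (\<lambda>t. g (x(i := t))) (x i)"

definition pd2 :: "nat \<Rightarrow> nat \<Rightarrow> ((nat \<Rightarrow> complex) \<Rightarrow> complex) \<Rightarrow> (nat \<Rightarrow> complex) \<Rightarrow> complex" where
  "pd2 i j g = pd i (pd j g)"

text \<open>Second transvectant: Omega is the 3x3 operator determinant
  sum over sigma of sign sigma * d/dx_(sigma 1) d/dy_(sigma 2) d/dz_(sigma 3);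
  squaring, applying to f(x)g(y)h(z) and setting y = z = x gives the formula below.\<close>

definition J2 :: "((nat \<Rightarrow> complex) \<Rightarrow> complex) \<Rightarrow> ((nat \<Rightarrow> complex) \<Rightarrow> complex)
    \<Rightarrow> ((nat \<Rightarrow> complex) \<Rightarrow> complex) \<Rightarrow> (nat \<Rightarrow> complex) \<Rightarrow> complex" where
  "J2 f g h x = (\<Sum>\<sigma>\<in>{p. p permutes {1..3::nat}}. \<Sum>\<tau>\<in>{p. p permutes {1..3::nat}}.
      of_int (sign \<sigma> * sign \<tau>) * pd2 (\<sigma> 1) (\<tau> 1) f x * pd2 (\<sigma> 2) (\<tau> 2) g x
        * pd2 (\<sigma> 3) (\<tau> 3) h x)"

definition cubic_form :: "(nat \<Rightarrow> nat \<Rightarrow> nat \<Rightarrow> complex) \<Rightarrow> (nat \<Rightarrow> complex) \<Rightarrow> complex" where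
  "cubic_form a x = (\<Sum>i\<in>{1..3}. \<Sum>j\<in>{i..3}. \<Sum>k\<in>{j..3}. a i j k * x i * x j * x k)"

definition biquad_form :: "(nat \<Rightarrow> nat \<Rightarrow> nat \<Rightarrow> nat \<Rightarrow> complex) \<Rightarrow> (nat \<Rightarrow> complex) \<Rightarrow> (nat \<Rightarrow> complex) \<Rightarrow> complex" where
  "biquad_form b u x = (\<Sum>i\<in>{1..3}. \<Sum>j\<in>{i..3}. \<Sum>k\<in>{1..3}. \<Sum>l\<in>{k..3}.
      b i j k l * u i * u j * x k * x l)"

definition lin_form :: "(nat \<Rightarrow> complex) \<Rightarrow> (nat \<Rightarrow> complex) \<Rightarrow> complex" where
  "lin_form l x = (\<Sum>i\<in>{1..3}. l i * x i)"

definition completely_reducible :: "((nat \<Rightarrow> complex) \<Rightarrow> complex) \<Rightarrow> bool" where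
  "completely_reducible f \<longleftrightarrow>
     (\<exists>l1 l2 l3. \<forall>x. f x = lin_form l1 x * lin_form l2 x * lin_form l3 x)"

end

theory Submission
  imports Defs "HOL-Computational_Algebra.Fundamental_Theorem_Algebra"
begin


lemma set13: "{1..3::nat} = {1,2,3}" by auto
lemma set23: "{2..3::nat} = {2,3}" by auto
lemma sum3: "(\<Sum>i\<in>{1..3::nat}. f i) = f 1 + f 2 + f 3"
  unfolding set13 by (simp add: add.assoc)
lemma sum23: "(\<Sum>i\<in>{2..3::nat}. f i) = f 2 + f 3"
  unfolding set23 by simp
lemma sum33: "(\<Sum>i\<in>{3..3::nat}. f i) = f 3" by simp

lemma cubic_expand: "cubic_form a x =
  a 1 1 1 * x 1 * x 1 * x 1 + a 1 1 2 * x 1 * x 1 * x 2 + a 1 1 3 * x 1 * x 1 * x 3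
  + a 1 2 2 * x 1 * x 2 * x 2 + a 1 2 3 * x 1 * x 2 * x 3 + a 1 3 3 * x 1 * x 3 * x 3
  + a 2 2 2 * x 2 * x 2 * x 2 + a 2 2 3 * x 2 * x 2 * x 3 + a 2 3 3 * x 2 * x 3 * x 3
  + a 3 3 3 * x 3 * x 3 * x 3"
  unfolding cubic_form_def sum3 sum23 sum33 by (simp add: algebra_simps)




definition P1 where "P1 a x = 3*a 1 1 1*x 1*x 1 + 2*a 1 1 2*x 1*x 2 + 2*a 1 1 3*x 1*x 3 + a 1 2 2*x 2*x 2 + a 1 2 3*x 2*x 3 + a 1 3 3*x 3*x 3"
definition P2 where "P2 a x = a 1 1 2*x 1*x 1 + 2*a 1 2 2*x 1*x 2 + a 1 2 3*x 1*x 3 + 3*a 2 2 2*x 2*x 2 + 2*a 2 2 3*x 2*x 3 + a 2 3 3*x 3*x 3"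
definition P3 where "P3 a x = a 1 1 3*x 1*x 1 + a 1 2 3*x 1*x 2 + 2*a 1 3 3*x 1*x 3 + a 2 2 3*x 2*x 2 + 2*a 2 3 3*x 2*x 3 + 3*a 3 3 3*x 3*x 3"

definition H :: "(nat \<Rightarrow> nat \<Rightarrow> nat \<Rightarrow> complex) \<Rightarrow> nat \<Rightarrow> nat \<Rightarrow> (nat \<Rightarrow> complex) \<Rightarrow> complex" where
 "H a i j x = (if i = 1 \<and> j = 1 then 6*a 1 1 1*x 1 + 2*a 1 1 2*x 2 + 2*a 1 1 3*x 3
  else if (i = 1 \<and> j = 2) \<or> (i = 2 \<and> j = 1) then 2*a 1 1 2*x 1 + 2*a 1 2 2*x 2 + a 1 2 3*x 3
  else if (i = 1 \<and> j = 3) \<or> (i = 3 \<and> j = 1) then 2*a 1 1 3*x 1 + a 1 2 3*x 2 + 2*a 1 3 3*x 3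
  else if i = 2 \<and> j = 2 then 2*a 1 2 2*x 1 + 6*a 2 2 2*x 2 + 2*a 2 2 3*x 3
  else if (i = 2 \<and> j = 3) \<or> (i = 3 \<and> j = 2) then a 1 2 3*x 1 + 2*a 2 2 3*x 2 + 2*a 2 3 3*x 3
  else 2*a 1 3 3*x 1 + 2*a 2 3 3*x 2 + 6*a 3 3 3*x 3)"

lemma fu: "(x(i := t)) j = (if j = i then t else x j)" by simp

lemma pd_c1: "pd 1 (cubic_form a) = P1 a"
  unfolding cubic_expand P1_def pd_def
  apply (rule ext)
  apply (rule DERIV_imp_deriv)
  apply simp
  apply (rule derivative_eq_intros refl)+
  apply (simp add: algebra_simps)?
  done

lemma pd_c2: "pd 2 (cubic_form a) = P2 a"
  unfolding cubic_expand P2_def pd_def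
  apply (rule ext)
  apply (rule DERIV_imp_deriv)
  apply simp
  apply (rule derivative_eq_intros refl)+
  apply (simp add: algebra_simps)?
  done

lemma pd_c3: "pd 3 (cubic_form a) = P3 a"
  unfolding cubic_expand P3_def pd_def
  apply (rule ext)
  apply (rule DERIV_imp_deriv)
  apply simp
  apply (rule derivative_eq_intros refl)+
  apply (simp add: algebra_simps)?
  done

lemma pd_P11: "pd 1 (P1 a) = H a 1 1"
  unfolding P1_def H_def pd_def
  apply (rule ext)
  apply (rule DERIV_imp_deriv)
  apply simp
  apply (rule derivative_eq_intros refl)+
  apply (simp add: algebra_simps)?
  done

lemma pd_P21: "pd 1 (P2 a) = H a 1 2"
  unfolding P2_def H_def pd_def
  apply (rule ext)
  apply (rule DERIV_imp_deriv)
  apply simp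
  apply (rule derivative_eq_intros refl)+
  apply (simp add: algebra_simps)?
  done

lemma pd_P31: "pd 1 (P3 a) = H a 1 3"
  unfolding P3_def H_def pd_def
  apply (rule ext)
  apply (rule DERIV_imp_deriv)
  apply simp
  apply (rule derivative_eq_intros refl)+
  apply (simp add: algebra_simps)?
  done

lemma pd_P12: "pd 2 (P1 a) = H a 2 1"
  unfolding P1_def H_def pd_def
  apply (rule ext)
  apply (rule DERIV_imp_deriv)
  apply simp
  apply (rule derivative_eq_intros refl)+
  apply (simp add: algebra_simps)?
  done

lemma pd_P22: "pd 2 (P2 a) = H a 2 2"
  unfolding P2_def H_def pd_def
  apply (rule ext)
  apply (rule DERIV_imp_deriv)
  apply simp
  apply (rule derivative_eq_intros refl)+
  apply (simp add: algebra_simps)?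
  done

lemma pd_P32: "pd 2 (P3 a) = H a 2 3"
  unfolding P3_def H_def pd_def
  apply (rule ext)
  apply (rule DERIV_imp_deriv)
  apply simp
  apply (rule derivative_eq_intros refl)+
  apply (simp add: algebra_simps)?
  done

lemma pd_P13: "pd 3 (P1 a) = H a 3 1"
  unfolding P1_def H_def pd_def
  apply (rule ext)
  apply (rule DERIV_imp_deriv)
  apply simp
  apply (rule derivative_eq_intros refl)+
  apply (simp add: algebra_simps)?
  done

lemma pd_P23: "pd 3 (P2 a) = H a 3 2"
  unfolding P2_def H_def pd_def
  apply (rule ext)
  apply (rule DERIV_imp_deriv)
  apply simp
  apply (rule derivative_eq_intros refl)+
  apply (simp add: algebra_simps)?
  done

lemma pd_P33: "pd 3 (P3 a) = H a 3 3"
  unfolding P3_def H_def pd_def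
  apply (rule ext)
  apply (rule DERIV_imp_deriv)
  apply simp
  apply (rule derivative_eq_intros refl)+
  apply (simp add: algebra_simps)?
  done

lemma pd2_c: "pd2 i j (cubic_form a) x = H a i j x" if "i \<in> {1,2,3}" "j \<in> {1,2,3}"
  using that unfolding pd2_def by (elim insertE emptyE; hypsubst; simp only: pd_c1 pd_c2 pd_c3 pd_P11 pd_P12 pd_P13 pd_P21 pd_P22 pd_P23 pd_P31 pd_P32 pd_P33)

lemma pd_sq: "pd j (\<lambda>y. (lin_form u y)\<^sup>2) = (\<lambda>x. 2 * u j * lin_form u x)" if "j \<in> {1,2,3}"
  using that unfolding lin_form_def sum3 pd_def
  apply (rule_tac ext)
  apply (rule DERIV_imp_deriv)
  apply (elim insertE; simp)
  apply (rule derivative_eq_intros refl)+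
  apply (simp add: algebra_simps)
  apply (rule derivative_eq_intros refl)+
  apply (simp add: algebra_simps)
  apply (rule derivative_eq_intros refl)+
  apply (simp add: algebra_simps)
  done


declare One_nat_def [simp del]


lemma pd2_sq: "pd2 i j (\<lambda>y. (lin_form u y)\<^sup>2) x = 2 * u j * u i" if "i \<in> {1,2,3}" "j \<in> {1,2,3}"
proof -
  have "pd i (\<lambda>x. 2 * u j * lin_form u x) x = 2 * u j * u i"
    using that(1) unfolding lin_form_def sum3 pd_def
    apply (rule_tac DERIV_imp_deriv)
    apply (elim insertE emptyE; simp)
    apply (rule derivative_eq_intros refl)+
    apply (simp add: algebra_simps)
    apply (rule derivative_eq_intros refl)+
    apply (simp add: algebra_simps)
    apply (rule derivative_eq_intros refl)+
    apply (simp add: algebra_simps)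
    done
  then show ?thesis unfolding pd2_def pd_sq[OF that(2)] .
qed

definition pm :: "nat \<times> nat \<times> nat \<Rightarrow> nat \<Rightarrow> nat" where
  "pm t = (\<lambda>x. if x = 1 then fst t else if x = 2 then fst (snd t) else if x = 3 then snd (snd t) else x)"

definition Tr :: "(nat \<times> nat \<times> nat) set" where
  "Tr = {(1,2,3),(2,1,3),(3,2,1),(1,3,2),(2,3,1),(3,1,2)}"

lemma pm1: "pm (1,2,3) = id" by (auto simp: pm_def fun_eq_iff)
lemma pm2: "pm (2,1,3) = Transposition.transpose 1 2" by (auto simp: pm_def fun_eq_iff Transposition.transpose_def)
lemma pm3: "pm (3,2,1) = Transposition.transpose 1 3" by (auto simp: pm_def fun_eq_iff Transposition.transpose_def)
lemma pm4: "pm (1,3,2) = Transposition.transpose 2 3" by (auto simp: pm_def fun_eq_iff Transposition.transpose_def)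
lemma pm5: "pm (2,3,1) = Transposition.transpose 1 2 \<circ> Transposition.transpose 2 3" by (auto simp: pm_def fun_eq_iff Transposition.transpose_def)
lemma pm6: "pm (3,1,2) = Transposition.transpose 1 3 \<circ> Transposition.transpose 2 3" by (auto simp: pm_def fun_eq_iff Transposition.transpose_def)

lemma pm_permutes: "t \<in> Tr \<Longrightarrow> pm t permutes {1..3}"
  unfolding Tr_def
  by (auto simp: pm1 pm2 pm3 pm4 pm5 pm6 intro!: permutes_swap_id permutes_compose permutes_id)

lemma sign_pm: "sign (pm (1,2,3)) = 1" "sign (pm (2,1,3)) = -1" "sign (pm (3,2,1)) = -1"
  "sign (pm (1,3,2)) = -1" "sign (pm (2,3,1)) = 1" "sign (pm (3,1,2)) = 1"
  by (simp_all add: pm1 pm2 pm3 pm4 pm5 pm6 sign_swap_id sign_compose permutation_swap_id)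

lemma perm_in_Tr:
  assumes "p permutes {1..3::nat}"
  shows "(p 1, p 2, p 3) \<in> Tr \<and> p = pm (p 1, p 2, p 3)"
proof -
  have im: "p x \<in> {1..3}" if "x \<in> {1..3}" for x using assms that by (rule permutes_in_image[THEN iffD2])
  have fx: "p x = x" if "x \<notin> {1..3}" for x using assms that by (simp add: permutes_not_in)
  have inj: "inj p" using assms by (rule permutes_inj)
  have a: "p 1 \<in> {1,2,3}" "p 2 \<in> {1,2,3}" "p 3 \<in> {1,2,3}" using im[of 1] im[of 2] im[of 3] by (auto simp: set13)
  have d: "p 1 \<noteq> p 2" "p 1 \<noteq> p 3" "p 2 \<noteq> p 3" by (simp_all add: inj_eq[OF inj])
  have "(p 1, p 2, p 3) \<in> Tr" using a d unfolding Tr_def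
    apply (elim insertE emptyE)
    by simp_all
  moreover have "p = pm (p 1, p 2, p 3)"
  proof
    fix x show "p x = pm (p 1, p 2, p 3) x"
      by (cases "x = 1"; cases "x = 2"; cases "x = 3"; simp add: pm_def fx)
  qed
  ultimately show ?thesis by simp
qed

lemma bij_pm: "bij_betw pm Tr {p. p permutes {1..3::nat}}"
proof (rule bij_betw_imageI)
  show "inj_on pm Tr"
    by (rule inj_on_inverseI[where g = "\<lambda>p. (p 1, p 2, p 3)"]) (auto simp: Tr_def pm_def)
  show "pm ` Tr = {p. p permutes {1..3}}"
  proof
    show "pm ` Tr \<subseteq> {p. p permutes {1..3}}" using pm_permutes by auto
    show "{p. p permutes {1..3}} \<subseteq> pm ` Tr"
    proof
      fix p assume "p \<in> {p. p permutes {1..3::nat}}"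
      then have "(p 1, p 2, p 3) \<in> Tr \<and> p = pm (p 1, p 2, p 3)" using perm_in_Tr by auto
      then show "p \<in> pm ` Tr" by (metis image_eqI)
    qed
  qed
qed

lemma sum_perm: "(\<Sum>p\<in>{p. p permutes {1..3::nat}}. G p) = (\<Sum>t\<in>Tr. G (pm t))"
  using sum.reindex_bij_betw[OF bij_pm, of G] by simp

lemma J2_expand: "J2 f g h x = (\<Sum>t\<in>Tr. \<Sum>s\<in>Tr. of_int (sign (pm t) * sign (pm s)) *
   pd2 (pm t 1) (pm s 1) f x * pd2 (pm t 2) (pm s 2) g x * pd2 (pm t 3) (pm s 3) h x)"
  unfolding J2_def sum_perm ..




lemma pm_app: "pm (a,b,c) 1 = a" "pm (a,b,c) 2 = b" "pm (a,b,c) 3 = c" by (simp_all add: pm_def)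

definition Dc :: "(nat \<Rightarrow> nat \<Rightarrow> nat \<Rightarrow> complex) \<Rightarrow> nat \<Rightarrow> nat \<Rightarrow> nat \<Rightarrow> complex" where
 "Dc a i j k = (if (i,j,k) = (1,1,1) then - 4 * (a 1 1 3) * (a 1 1 3) * (a 1 2 2) + 4 * (a 1 1 2) * (a 1 1 3) * (a 1 2 3) - 4 * (a 1 1 2) * (a 1 1 2) * (a 1 3 3) - 3 * (a 1 1 1) * (a 1 2 3) * (a 1 2 3) + 12 * (a 1 1 1) * (a 1 2 2) * (a 1 3 3)
  else if (i,j,k) = (1,1,2) then - 12 * (a 1 1 3) * (a 1 1 3) * (a 2 2 2) + (a 1 1 2) * (a 1 2 3) * (a 1 2 3) - 4 * (a 1 1 2) * (a 1 2 2) * (a 1 3 3) + 8 * (a 1 1 2) * (a 1 1 3) * (a 2 2 3) - 4 * (a 1 1 2) * (a 1 1 2) * (a 2 3 3) + 36 * (a 1 1 1) * (a 1 3 3) * (a 2 2 2) - 12 * (a 1 1 1) * (a 1 2 3) * (a 2 2 3) + 12 * (a 1 1 1) * (a 1 2 2) * (a 2 3 3)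
  else if (i,j,k) = (1,1,3) then (a 1 1 3) * (a 1 2 3) * (a 1 2 3) - 4 * (a 1 1 3) * (a 1 2 2) * (a 1 3 3) - 4 * (a 1 1 3) * (a 1 1 3) * (a 2 2 3) + 8 * (a 1 1 2) * (a 1 1 3) * (a 2 3 3) - 12 * (a 1 1 2) * (a 1 1 2) * (a 3 3 3) + 12 * (a 1 1 1) * (a 1 3 3) * (a 2 2 3) - 12 * (a 1 1 1) * (a 1 2 3) * (a 2 3 3) + 36 * (a 1 1 1) * (a 1 2 2) * (a 3 3 3)
  else if (i,j,k) = (1,2,2) then (a 1 2 2) * (a 1 2 3) * (a 1 2 3) - 4 * (a 1 2 2) * (a 1 2 2) * (a 1 3 3) - 12 * (a 1 1 3) * (a 1 2 3) * (a 2 2 2) + 8 * (a 1 1 3) * (a 1 2 2) * (a 2 2 3) + 12 * (a 1 1 2) * (a 1 3 3) * (a 2 2 2) - 4 * (a 1 1 2) * (a 1 2 2) * (a 2 3 3) - 12 * (a 1 1 1) * (a 2 2 3) * (a 2 2 3) + 36 * (a 1 1 1) * (a 2 2 2) * (a 2 3 3)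
  else if (i,j,k) = (1,2,3) then (a 1 2 3) * (a 1 2 3) * (a 1 2 3) - 4 * (a 1 2 2) * (a 1 2 3) * (a 1 3 3) - 12 * (a 1 1 3) * (a 1 3 3) * (a 2 2 2) - 4 * (a 1 1 3) * (a 1 2 3) * (a 2 2 3) + 12 * (a 1 1 3) * (a 1 2 2) * (a 2 3 3) + 12 * (a 1 1 2) * (a 1 3 3) * (a 2 2 3) - 4 * (a 1 1 2) * (a 1 2 3) * (a 2 3 3) - 12 * (a 1 1 2) * (a 1 2 2) * (a 3 3 3) - 12 * (a 1 1 1) * (a 2 2 3) * (a 2 3 3) + 108 * (a 1 1 1) * (a 2 2 2) * (a 3 3 3)
  else if (i,j,k) = (1,3,3) then (a 1 2 3) * (a 1 2 3) * (a 1 3 3) - 4 * (a 1 2 2) * (a 1 3 3) * (a 1 3 3) - 4 * (a 1 1 3) * (a 1 3 3) * (a 2 2 3) + 12 * (a 1 1 3) * (a 1 2 2) * (a 3 3 3) + 8 * (a 1 1 2) * (a 1 3 3) * (a 2 3 3) - 12 * (a 1 1 2) * (a 1 2 3) * (a 3 3 3) - 12 * (a 1 1 1) * (a 2 3 3) * (a 2 3 3) + 36 * (a 1 1 1) * (a 2 2 3) * (a 3 3 3)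
  else if (i,j,k) = (2,2,2) then - 3 * (a 1 2 3) * (a 1 2 3) * (a 2 2 2) + 4 * (a 1 2 2) * (a 1 2 3) * (a 2 2 3) - 4 * (a 1 2 2) * (a 1 2 2) * (a 2 3 3) - 4 * (a 1 1 2) * (a 2 2 3) * (a 2 2 3) + 12 * (a 1 1 2) * (a 2 2 2) * (a 2 3 3)
  else if (i,j,k) = (2,2,3) then - 12 * (a 1 2 3) * (a 1 3 3) * (a 2 2 2) + (a 1 2 3) * (a 1 2 3) * (a 2 2 3) + 8 * (a 1 2 2) * (a 1 3 3) * (a 2 2 3) - 12 * (a 1 2 2) * (a 1 2 2) * (a 3 3 3) - 4 * (a 1 1 3) * (a 2 2 3) * (a 2 2 3) + 12 * (a 1 1 3) * (a 2 2 2) * (a 2 3 3) - 4 * (a 1 1 2) * (a 2 2 3) * (a 2 3 3) + 36 * (a 1 1 2) * (a 2 2 2) * (a 3 3 3)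
  else if (i,j,k) = (2,3,3) then - 12 * (a 1 3 3) * (a 1 3 3) * (a 2 2 2) + (a 1 2 3) * (a 1 2 3) * (a 2 3 3) + 8 * (a 1 2 2) * (a 1 3 3) * (a 2 3 3) - 12 * (a 1 2 2) * (a 1 2 3) * (a 3 3 3) - 4 * (a 1 1 3) * (a 2 2 3) * (a 2 3 3) + 36 * (a 1 1 3) * (a 2 2 2) * (a 3 3 3) - 4 * (a 1 1 2) * (a 2 3 3) * (a 2 3 3) + 12 * (a 1 1 2) * (a 2 2 3) * (a 3 3 3)
  else if (i,j,k) = (3,3,3) then - 4 * (a 1 3 3) * (a 1 3 3) * (a 2 2 3) + 4 * (a 1 2 3) * (a 1 3 3) * (a 2 3 3) - 3 * (a 1 2 3) * (a 1 2 3) * (a 3 3 3) - 4 * (a 1 1 3) * (a 2 3 3) * (a 2 3 3) + 12 * (a 1 1 3) * (a 2 2 3) * (a 3 3 3)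
  else 0)"

definition Tc :: "(nat \<Rightarrow> nat \<Rightarrow> nat \<Rightarrow> complex) \<Rightarrow> nat \<Rightarrow> nat \<Rightarrow> nat \<Rightarrow> nat \<Rightarrow> complex" where
 "Tc a i j k l = (if (i,j,k,l) = (1,1,1,1) then - (a 1 2 3) * (a 1 2 3) + 4 * (a 1 2 2) * (a 1 3 3)
  else if (i,j,k,l) = (1,1,1,2) then 12 * (a 1 3 3) * (a 2 2 2) - 4 * (a 1 2 3) * (a 2 2 3) + 4 * (a 1 2 2) * (a 2 3 3)
  else if (i,j,k,l) = (1,1,1,3) then 4 * (a 1 3 3) * (a 2 2 3) - 4 * (a 1 2 3) * (a 2 3 3) + 12 * (a 1 2 2) * (a 3 3 3)
  else if (i,j,k,l) = (1,1,2,2) then - 4 * (a 2 2 3) * (a 2 2 3) + 12 * (a 2 2 2) * (a 2 3 3)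
  else if (i,j,k,l) = (1,1,2,3) then - 4 * (a 2 2 3) * (a 2 3 3) + 36 * (a 2 2 2) * (a 3 3 3)
  else if (i,j,k,l) = (1,1,3,3) then - 4 * (a 2 3 3) * (a 2 3 3) + 12 * (a 2 2 3) * (a 3 3 3)
  else if (i,j,k,l) = (1,2,1,1) then 4 * (a 1 1 3) * (a 1 2 3) - 8 * (a 1 1 2) * (a 1 3 3)
  else if (i,j,k,l) = (1,2,1,2) then 2 * (a 1 2 3) * (a 1 2 3) - 8 * (a 1 2 2) * (a 1 3 3) + 8 * (a 1 1 3) * (a 2 2 3) - 8 * (a 1 1 2) * (a 2 3 3)
  else if (i,j,k,l) = (1,2,1,3) then 8 * (a 1 1 3) * (a 2 3 3) - 24 * (a 1 1 2) * (a 3 3 3)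
  else if (i,j,k,l) = (1,2,2,2) then 4 * (a 1 2 3) * (a 2 2 3) - 8 * (a 1 2 2) * (a 2 3 3)
  else if (i,j,k,l) = (1,2,2,3) then 8 * (a 1 3 3) * (a 2 2 3) - 24 * (a 1 2 2) * (a 3 3 3)
  else if (i,j,k,l) = (1,2,3,3) then 8 * (a 1 3 3) * (a 2 3 3) - 12 * (a 1 2 3) * (a 3 3 3)
  else if (i,j,k,l) = (1,3,1,1) then - 8 * (a 1 1 3) * (a 1 2 2) + 4 * (a 1 1 2) * (a 1 2 3)
  else if (i,j,k,l) = (1,3,1,2) then - 24 * (a 1 1 3) * (a 2 2 2) + 8 * (a 1 1 2) * (a 2 2 3)
  else if (i,j,k,l) = (1,3,1,3) then 2 * (a 1 2 3) * (a 1 2 3) - 8 * (a 1 2 2) * (a 1 3 3) - 8 * (a 1 1 3) * (a 2 2 3) + 8 * (a 1 1 2) * (a 2 3 3)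
  else if (i,j,k,l) = (1,3,2,2) then - 12 * (a 1 2 3) * (a 2 2 2) + 8 * (a 1 2 2) * (a 2 2 3)
  else if (i,j,k,l) = (1,3,2,3) then - 24 * (a 1 3 3) * (a 2 2 2) + 8 * (a 1 2 2) * (a 2 3 3)
  else if (i,j,k,l) = (1,3,3,3) then - 8 * (a 1 3 3) * (a 2 2 3) + 4 * (a 1 2 3) * (a 2 3 3)
  else if (i,j,k,l) = (2,2,1,1) then - 4 * (a 1 1 3) * (a 1 1 3) + 12 * (a 1 1 1) * (a 1 3 3)
  else if (i,j,k,l) = (2,2,1,2) then - 4 * (a 1 1 3) * (a 1 2 3) + 4 * (a 1 1 2) * (a 1 3 3) + 12 * (a 1 1 1) * (a 2 3 3)
  else if (i,j,k,l) = (2,2,1,3) then - 4 * (a 1 1 3) * (a 1 3 3) + 36 * (a 1 1 1) * (a 3 3 3)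
  else if (i,j,k,l) = (2,2,2,2) then - (a 1 2 3) * (a 1 2 3) + 4 * (a 1 1 2) * (a 2 3 3)
  else if (i,j,k,l) = (2,2,2,3) then - 4 * (a 1 2 3) * (a 1 3 3) + 4 * (a 1 1 3) * (a 2 3 3) + 12 * (a 1 1 2) * (a 3 3 3)
  else if (i,j,k,l) = (2,2,3,3) then - 4 * (a 1 3 3) * (a 1 3 3) + 12 * (a 1 1 3) * (a 3 3 3)
  else if (i,j,k,l) = (2,3,1,1) then 8 * (a 1 1 2) * (a 1 1 3) - 12 * (a 1 1 1) * (a 1 2 3)
  else if (i,j,k,l) = (2,3,1,2) then 8 * (a 1 1 3) * (a 1 2 2) - 24 * (a 1 1 1) * (a 2 2 3)
  else if (i,j,k,l) = (2,3,1,3) then 8 * (a 1 1 2) * (a 1 3 3) - 24 * (a 1 1 1) * (a 2 3 3)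
  else if (i,j,k,l) = (2,3,2,2) then 4 * (a 1 2 2) * (a 1 2 3) - 8 * (a 1 1 2) * (a 2 2 3)
  else if (i,j,k,l) = (2,3,2,3) then 2 * (a 1 2 3) * (a 1 2 3) + 8 * (a 1 2 2) * (a 1 3 3) - 8 * (a 1 1 3) * (a 2 2 3) - 8 * (a 1 1 2) * (a 2 3 3)
  else if (i,j,k,l) = (2,3,3,3) then 4 * (a 1 2 3) * (a 1 3 3) - 8 * (a 1 1 3) * (a 2 3 3)
  else if (i,j,k,l) = (3,3,1,1) then - 4 * (a 1 1 2) * (a 1 1 2) + 12 * (a 1 1 1) * (a 1 2 2)
  else if (i,j,k,l) = (3,3,1,2) then - 4 * (a 1 1 2) * (a 1 2 2) + 36 * (a 1 1 1) * (a 2 2 2)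
  else if (i,j,k,l) = (3,3,1,3) then 4 * (a 1 1 3) * (a 1 2 2) - 4 * (a 1 1 2) * (a 1 2 3) + 12 * (a 1 1 1) * (a 2 2 3)
  else if (i,j,k,l) = (3,3,2,2) then - 4 * (a 1 2 2) * (a 1 2 2) + 12 * (a 1 1 2) * (a 2 2 2)
  else if (i,j,k,l) = (3,3,2,3) then - 4 * (a 1 2 2) * (a 1 2 3) + 12 * (a 1 1 3) * (a 2 2 2) + 4 * (a 1 1 2) * (a 2 2 3)
  else if (i,j,k,l) = (3,3,3,3) then - (a 1 2 3) * (a 1 2 3) + 4 * (a 1 1 3) * (a 2 2 3)
  else 0)"

lemma biquad_expand: "biquad_form b u x = b 1 1 1 1 * u 1 * u 1 * x 1 * x 1 + b 1 1 1 2 * u 1 * u 1 * x 1 * x 2 + b 1 1 1 3 * u 1 * u 1 * x 1 * x 3 + b 1 1 2 2 * u 1 * u 1 * x 2 * x 2 + b 1 1 2 3 * u 1 * u 1 * x 2 * x 3 + b 1 1 3 3 * u 1 * u 1 * x 3 * x 3 + b 1 2 1 1 * u 1 * u 2 * x 1 * x 1 + b 1 2 1 2 * u 1 * u 2 * x 1 * x 2 + b 1 2 1 3 * u 1 * u 2 * x 1 * x 3 + b 1 2 2 2 * u 1 * u 2 * x 2 * x 2 + b 1 2 2 3 * u 1 * u 2 * x 2 * x 3 + b 1 2 3 3 * u 1 * u 2 * x 3 * x 3 + b 1 3 1 1 * u 1 * u 3 * x 1 * x 1 + b 1 3 1 2 * u 1 * u 3 * x 1 * x 2 + b 1 3 1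 3 * u 1 * u 3 * x 1 * x 3 + b 1 3 2 2 * u 1 * u 3 * x 2 * x 2 + b 1 3 2 3 * u 1 * u 3 * x 2 * x 3 + b 1 3 3 3 * u 1 * u 3 * x 3 * x 3 + b 2 2 1 1 * u 2 * u 2 * x 1 * x 1 + b 2 2 1 2 * u 2 * u 2 * x 1 * x 2 + b 2 2 1 3 * u 2 * u 2 * x 1 * x 3 + b 2 2 2 2 * u 2 * u 2 * x 2 * x 2 + b 2 2 2 3 * u 2 * u 2 * x 2 * x 3 + b 2 2 3 3 * u 2 * u 2 * x 3 * x 3 + b 2 3 1 1 * u 2 * u 3 * x 1 * x 1 + b 2 3 1 2 * u 2 * u 3 * x 1 * x 2 + b 2 3 1 3 * u 2 * u 3 * x 1 * x 3 + b 2 3 2 2 * u 2 * u 3 * x 2 * x 2 + b 2 3 2 3 * u 2 * u 3 * x 2 * x 3 + b 2 3 3 3 * u 2 * u 3 * x 3 * x 3 + b 3 3 1 1 * u 3 * u 3 * x 1 * x 1 + b 3 3 1 2 * u 3 * u 3 * x 1 * x 2 + b 3 3 1 3 * u 3 * u 3 * x 1 * x 3 + b 3 3 2 2 * u 3 * u 3 * x 2 * x 2 + b 3 3 2 3 * u 3 * u 3 * x 2 * x 3 + b 3 3 3 3 * u 3 * u 3 * x 3 * x 3"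
  unfolding biquad_form_def sum3 sum23 sum33 by (simp add: algebra_simps)

lemma J2_fff: "(1/12) * J2 (cubic_form a) (cubic_form a) (cubic_form a) x = cubic_form (Dc a) x"
  unfolding J2_expand Tr_def
  apply (simp add: pm_app sign_pm pd2_c)
  unfolding cubic_expand Dc_def H_def
  apply simp
  apply algebra
  done

lemma J2_ffu: "(1/4) * J2 (cubic_form a) (cubic_form a) (\<lambda>y. (lin_form u y)\<^sup>2) x = biquad_form (Tc a) u x"
  unfolding J2_expand Tr_def
  apply (simp add: pm_app sign_pm pd2_c pd2_sq)
  unfolding biquad_expand Tc_def H_def
  apply simp
  apply algebra
  done




definition v3 :: "complex \<Rightarrow> complex \<Rightarrow> complex \<Rightarrow> nat \<Rightarrow> complex" where
  "v3 p q r = (\<lambda>n. if n = 1 then p else if n = 2 then q else if n = 3 then r else 0)"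
lemma v3_app[simp]: "v3 p q r 1 = p" "v3 p q r 2 = q" "v3 p q r 3 = r" by (simp_all add: v3_def)

lemma cubic_uniq:
  assumes "\<forall>x. cubic_form A x = cubic_form B x"
  shows "A 1 1 1 = B 1 1 1 \<and> A 1 1 2 = B 1 1 2 \<and> A 1 1 3 = B 1 1 3 \<and> A 1 2 2 = B 1 2 2 \<and>
    A 1 2 3 = B 1 2 3 \<and> A 1 3 3 = B 1 3 3 \<and> A 2 2 2 = B 2 2 2 \<and> A 2 2 3 = B 2 2 3 \<and>
    A 2 3 3 = B 2 3 3 \<and> A 3 3 3 = B 3 3 3"
proof -
  have e: "cubic_form A (v3 p q r) = cubic_form B (v3 p q r)" for p q r using assms by blast
  note E = e[unfolded cubic_expand v3_app]
  have 1: "A 1 1 1 = B 1 1 1" using E[of 1 0 0] by simp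
  have 2: "A 2 2 2 = B 2 2 2" using E[of 0 1 0] by simp
  have 3: "A 3 3 3 = B 3 3 3" using E[of 0 0 1] by simp
  have a: "A 1 1 2 = B 1 1 2 \<and> A 1 2 2 = B 1 2 2" using E[of 1 1 0] E[of 1 "-1" 0] 1 2
    by (simp add: algebra_simps) algebra
  have b: "A 1 1 3 = B 1 1 3 \<and> A 1 3 3 = B 1 3 3" using E[of 1 0 1] E[of 1 0 "-1"] 1 3
    by (simp add: algebra_simps) algebra
  have c: "A 2 2 3 = B 2 2 3 \<and> A 2 3 3 = B 2 3 3" using E[of 0 1 1] E[of 0 1 "-1"] 2 3
    by (simp add: algebra_simps) algebra
  have d: "A 1 2 3 = B 1 2 3" using E[of 1 1 1] 1 2 3 a b c by simp
  show ?thesis using 1 2 3 a b c d by simp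
qed

definition qf :: "(nat \<Rightarrow> nat \<Rightarrow> complex) \<Rightarrow> (nat \<Rightarrow> complex) \<Rightarrow> complex" where
  "qf c x = c 1 1 * x 1 * x 1 + c 1 2 * x 1 * x 2 + c 1 3 * x 1 * x 3 + c 2 2 * x 2 * x 2 + c 2 3 * x 2 * x 3 + c 3 3 * x 3 * x 3"

lemma quad_uniq:
  assumes "\<forall>x. qf c x = qf d x"
  shows "c 1 1 = d 1 1 \<and> c 1 2 = d 1 2 \<and> c 1 3 = d 1 3 \<and> c 2 2 = d 2 2 \<and> c 2 3 = d 2 3 \<and> c 3 3 = d 3 3"
proof -
  have e: "qf c (v3 p q r) = qf d (v3 p q r)" for p q r using assms by blast
  note E = e[unfolded qf_def v3_app]
  have 1: "c 1 1 = d 1 1" using E[of 1 0 0] by simp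
  have 2: "c 2 2 = d 2 2" using E[of 0 1 0] by simp
  have 3: "c 3 3 = d 3 3" using E[of 0 0 1] by simp
  have "c 1 2 = d 1 2" using E[of 1 1 0] 1 2 by simp
  moreover have "c 1 3 = d 1 3" using E[of 1 0 1] 1 3 by simp
  moreover have "c 2 3 = d 2 3" using E[of 0 1 1] 2 3 by simp
  ultimately show ?thesis using 1 2 3 by simp
qed

lemma biquad_qf: "biquad_form b u x = qf (\<lambda>k l. qf (\<lambda>i j. b i j k l) u) x"
  unfolding biquad_expand qf_def by (simp add: algebra_simps)

lemma biquad_uniq:
  assumes "\<forall>u x. biquad_form A u x = biquad_form B u x"
  and "k \<in> {1,2,3}" "l \<in> {1,2,3}" "k \<le> l"
  shows "A 1 1 k l = B 1 1 k l \<and> A 1 2 k l = B 1 2 k l \<and> A 1 3 k l = B 1 3 k l \<and>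
    A 2 2 k l = B 2 2 k l \<and> A 2 3 k l = B 2 3 k l \<and> A 3 3 k l = B 3 3 k l"
proof -
  have "\<forall>u. qf (\<lambda>i j. A i j k l) u = qf (\<lambda>i j. B i j k l) u"
  proof
    fix u
    have "\<forall>x. qf (\<lambda>k l. qf (\<lambda>i j. A i j k l) u) x = qf (\<lambda>k l. qf (\<lambda>i j. B i j k l) u) x"
      using assms(1) by (simp add: biquad_qf)
    from quad_uniq[OF this] show "qf (\<lambda>i j. A i j k l) u = qf (\<lambda>i j. B i j k l) u"
      using assms(2-4) by auto
  qed
  from quad_uniq[OF this] show ?thesis by simp
qed




definition pc :: "(nat \<Rightarrow> complex) \<Rightarrow> (nat \<Rightarrow> complex) \<Rightarrow> (nat \<Rightarrow> complex) \<Rightarrow> nat \<Rightarrow> nat \<Rightarrow> nat \<Rightarrow> complex" where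
 "pc l1 l2 l3 i j k = (if (i,j,k) = (1,1,1) then l1 1 * l2 1 * l3 1
  else if (i,j,k) = (1,1,2) then l1 1 * l2 1 * l3 2 + l1 1 * l2 2 * l3 1 + l1 2 * l2 1 * l3 1
  else if (i,j,k) = (1,1,3) then l1 1 * l2 1 * l3 3 + l1 1 * l2 3 * l3 1 + l1 3 * l2 1 * l3 1
  else if (i,j,k) = (1,2,2) then l1 1 * l2 2 * l3 2 + l1 2 * l2 1 * l3 2 + l1 2 * l2 2 * l3 1
  else if (i,j,k) = (1,2,3) then l1 1 * l2 2 * l3 3 + l1 1 * l2 3 * l3 2 + l1 2 * l2 1 * l3 3 + l1 2 * l2 3 * l3 1 + l1 3 * l2 1 * l3 2 + l1 3 * l2 2 * l3 1
  else if (i,j,k) = (1,3,3) then l1 1 * l2 3 * l3 3 + l1 3 * l2 1 * l3 3 + l1 3 * l2 3 * l3 1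
  else if (i,j,k) = (2,2,2) then l1 2 * l2 2 * l3 2
  else if (i,j,k) = (2,2,3) then l1 2 * l2 2 * l3 3 + l1 2 * l2 3 * l3 2 + l1 3 * l2 2 * l3 2
  else if (i,j,k) = (2,3,3) then l1 2 * l2 3 * l3 3 + l1 3 * l2 2 * l3 3 + l1 3 * l2 3 * l3 2
  else if (i,j,k) = (3,3,3) then l1 3 * l2 3 * l3 3
  else 0)"

lemma pc_prod: "lin_form l1 x * lin_form l2 x * lin_form l3 x = cubic_form (pc l1 l2 l3) x"
  unfolding lin_form_def sum3 cubic_expand pc_def by simp algebra

definition det3 where "det3 l1 l2 l3 = l1 1 * (l2 2 * l3 3 - l2 3 * l3 2) - l1 2 * (l2 1 * l3 3 - l2 3 * l3 1) + l1 3 * (l2 1 * l3 2 - l2 2 * l3 1)"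

lemma Dc_pc_111: "Dc (pc l1 l2 l3) 1 1 1 = (det3 l1 l2 l3)^2 * pc l1 l2 l3 1 1 1"
  unfolding Dc_def pc_def det3_def by simp algebra

lemma Dc_pc_112: "Dc (pc l1 l2 l3) 1 1 2 = (det3 l1 l2 l3)^2 * pc l1 l2 l3 1 1 2"
  unfolding Dc_def pc_def det3_def by simp algebra

lemma Dc_pc_122: "Dc (pc l1 l2 l3) 1 2 2 = (det3 l1 l2 l3)^2 * pc l1 l2 l3 1 2 2"
  unfolding Dc_def pc_def det3_def by simp algebra

lemma Dc_pc_222: "Dc (pc l1 l2 l3) 2 2 2 = (det3 l1 l2 l3)^2 * pc l1 l2 l3 2 2 2"
  unfolding Dc_def pc_def det3_def by simp algebra

lemma Dc_pc_113: "Dc (pc l1 l2 l3) 1 1 3 = (det3 l1 l2 l3)^2 * pc l1 l2 l3 1 1 3"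
  unfolding Dc_def pc_def det3_def by simp algebra

lemma Dc_pc_123: "Dc (pc l1 l2 l3) 1 2 3 = (det3 l1 l2 l3)^2 * pc l1 l2 l3 1 2 3"
  unfolding Dc_def pc_def det3_def by simp algebra

lemma Dc_pc_223: "Dc (pc l1 l2 l3) 2 2 3 = (det3 l1 l2 l3)^2 * pc l1 l2 l3 2 2 3"
  unfolding Dc_def pc_def det3_def by simp algebra




lemma quad_factor: "\<exists>p1 r1 p2 r2. (A::complex) = p1*p2 \<and> B = p1*r2 + r1*p2 \<and> C = r1*r2"
proof (cases "A = 0")
  case True
  then show ?thesis by (rule_tac x=0 in exI, rule_tac x=1 in exI, rule_tac x=B in exI, rule_tac x=C in exI) simp
next
  case False
  define w where "w = csqrt (B^2 - 4*A*C)"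
  have w2: "w^2 = B^2 - 4*A*C" unfolding w_def by simp
  define t1 where "t1 = (-B + w)/(2*A)"
  define t2 where "t2 = (-B - w)/(2*A)"
  have "A = A*1 \<and> B = A*(-t2) + (-(A*t1))*1 \<and> C = (-(A*t1))*(-t2)"
  proof (intro conjI)
    show "B = A*(-t2) + (-(A*t1))*1" unfolding t1_def t2_def using False by (simp add: field_simps)
    have "(-(A*t1))*(-t2) = A * ((B^2 - w^2)/(4*A^2))" unfolding t1_def t2_def using False
      by (simp add: field_simps power2_eq_square)
    also have "\<dots> = A * ((4*A*C)/(4*A^2))" using w2 by simp
    also have "\<dots> = C" using False by (simp add: field_simps power2_eq_square)
    finally show "C = (-(A*t1))*(-t2)" by simp
  qed simp
  then show ?thesis by blast
qed

lemma cubic_factor: "\<exists>p1 r1 p2 r2 p3 r3. (c0::complex) = p1*p2*p3 \<and> c1 = p1*p2*r3 + p1*r2*p3 + r1*p2*p3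
   \<and> c2 = p1*r2*r3 + r1*p2*r3 + r1*r2*p3 \<and> c3 = r1*r2*r3"
proof (cases "c0 = 0")
  case True
  obtain p1 r1 p2 r2 where "c1 = p1*p2 \<and> c2 = p1*r2 + r1*p2 \<and> c3 = r1*r2" using quad_factor by blast
  then have "c0 = p1*p2*0 \<and> c1 = p1*p2*1 + p1*r2*0 + r1*p2*0
   \<and> c2 = p1*r2*1 + r1*p2*1 + r1*r2*0 \<and> c3 = r1*r2*1" using True by simp
  then show ?thesis by blast
next
  case False
  have "\<not> constant (poly [:c3,c2,c1,c0:])" using False by (simp add: constant_degree)
  then obtain z where z: "poly [:c3,c2,c1,c0:] z = 0" using fundamental_theorem_of_algebra by blast
  then have z3: "c3 = - (c2*z + c1*z^2 + c0*z^3)" by (simp add: algebra_simps power3_eq_cube power2_eq_square) algebra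
  obtain p1 r1 p2 r2 where q: "c0 = p1*p2 \<and> c1 + c0*z = p1*r2 + r1*p2 \<and> c2 + c1*z + c0*z^2 = r1*r2"
    using quad_factor by blast
  have "c0 = p1*p2*1 \<and> c1 = p1*p2*(-z) + p1*r2*1 + r1*p2*1
   \<and> c2 = p1*r2*(-z) + r1*p2*(-z) + r1*r2*1 \<and> c3 = r1*r2*(-z)"
    using q z3 by (simp add: algebra_simps power2_eq_square power3_eq_cube) algebra
  then show ?thesis by blast
qed

lemma Dc_111: "Dc a 1 1 1 = - 4 * (a 1 1 3) * (a 1 1 3) * (a 1 2 2) + 4 * (a 1 1 2) * (a 1 1 3) * (a 1 2 3) - 4 * (a 1 1 2) * (a 1 1 2) * (a 1 3 3) - 3 * (a 1 1 1) * (a 1 2 3) * (a 1 2 3) + 12 * (a 1 1 1) * (a 1 2 2) * (a 1 3 3)" by (simp add: Dc_def)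
lemma Dc_112: "Dc a 1 1 2 = - 12 * (a 1 1 3) * (a 1 1 3) * (a 2 2 2) + (a 1 1 2) * (a 1 2 3) * (a 1 2 3) - 4 * (a 1 1 2) * (a 1 2 2) * (a 1 3 3) + 8 * (a 1 1 2) * (a 1 1 3) * (a 2 2 3) - 4 * (a 1 1 2) * (a 1 1 2) * (a 2 3 3) + 36 * (a 1 1 1) * (a 1 3 3) * (a 2 2 2) - 12 * (a 1 1 1) * (a 1 2 3) * (a 2 2 3) + 12 * (a 1 1 1) * (a 1 2 2) * (a 2 3 3)" by (simp add: Dc_def)
lemma Dc_113: "Dc a 1 1 3 = (a 1 1 3) * (a 1 2 3) * (a 1 2 3) - 4 * (a 1 1 3) * (a 1 2 2) * (a 1 3 3) - 4 * (a 1 1 3) * (a 1 1 3) * (a 2 2 3) + 8 * (a 1 1 2) * (a 1 1 3) * (a 2 3 3) - 12 * (a 1 1 2) * (a 1 1 2) * (a 3 3 3) + 12 * (a 1 1 1) * (a 1 3 3) * (a 2 2 3) - 12 * (a 1 1 1) * (a 1 2 3) * (a 2 3 3) + 36 * (a 1 1 1) * (a 1 2 2) * (a 3 3 3)" by (simp add: Dc_def)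
lemma Dc_122: "Dc a 1 2 2 = (a 1 2 2) * (a 1 2 3) * (a 1 2 3) - 4 * (a 1 2 2) * (a 1 2 2) * (a 1 3 3) - 12 * (a 1 1 3) * (a 1 2 3) * (a 2 2 2) + 8 * (a 1 1 3) * (a 1 2 2) * (a 2 2 3) + 12 * (a 1 1 2) * (a 1 3 3) * (a 2 2 2) - 4 * (a 1 1 2) * (a 1 2 2) * (a 2 3 3) - 12 * (a 1 1 1) * (a 2 2 3) * (a 2 2 3) + 36 * (a 1 1 1) * (a 2 2 2) * (a 2 3 3)" by (simp add: Dc_def)
lemma Dc_123: "Dc a 1 2 3 = (a 1 2 3) * (a 1 2 3) * (a 1 2 3) - 4 * (a 1 2 2) * (a 1 2 3) * (a 1 3 3) - 12 * (a 1 1 3) * (a 1 3 3) * (a 2 2 2) - 4 * (a 1 1 3) * (a 1 2 3) * (a 2 2 3) + 12 * (a 1 1 3) * (a 1 2 2) * (a 2 3 3) + 12 * (a 1 1 2) * (a 1 3 3) * (a 2 2 3) - 4 * (a 1 1 2) * (a 1 2 3) * (a 2 3 3) - 12 * (a 1 1 2) * (a 1 2 2) * (a 3 3 3) - 12 * (a 1 1 1) * (a 2 2 3) * (a 2 3 3) + 108 * (a 1 1 1) * (a 2 2 2) * (a 3 3 3)" by (simp add: Dc_def)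
lemma Dc_133: "Dc a 1 3 3 = (a 1 2 3) * (a 1 2 3) * (a 1 3 3) - 4 * (a 1 2 2) * (a 1 3 3) * (a 1 3 3) - 4 * (a 1 1 3) * (a 1 3 3) * (a 2 2 3) + 12 * (a 1 1 3) * (a 1 2 2) * (a 3 3 3) + 8 * (a 1 1 2) * (a 1 3 3) * (a 2 3 3) - 12 * (a 1 1 2) * (a 1 2 3) * (a 3 3 3) - 12 * (a 1 1 1) * (a 2 3 3) * (a 2 3 3) + 36 * (a 1 1 1) * (a 2 2 3) * (a 3 3 3)" by (simp add: Dc_def)
lemma Dc_222: "Dc a 2 2 2 = - 3 * (a 1 2 3) * (a 1 2 3) * (a 2 2 2) + 4 * (a 1 2 2) * (a 1 2 3) * (a 2 2 3) - 4 * (a 1 2 2) * (a 1 2 2) * (a 2 3 3) - 4 * (a 1 1 2) * (a 2 2 3) * (a 2 2 3) + 12 * (a 1 1 2) * (a 2 2 2) * (a 2 3 3)" by (simp add: Dc_def)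
lemma Dc_223: "Dc a 2 2 3 = - 12 * (a 1 2 3) * (a 1 3 3) * (a 2 2 2) + (a 1 2 3) * (a 1 2 3) * (a 2 2 3) + 8 * (a 1 2 2) * (a 1 3 3) * (a 2 2 3) - 12 * (a 1 2 2) * (a 1 2 2) * (a 3 3 3) - 4 * (a 1 1 3) * (a 2 2 3) * (a 2 2 3) + 12 * (a 1 1 3) * (a 2 2 2) * (a 2 3 3) - 4 * (a 1 1 2) * (a 2 2 3) * (a 2 3 3) + 36 * (a 1 1 2) * (a 2 2 2) * (a 3 3 3)" by (simp add: Dc_def)
lemma Dc_233: "Dc a 2 3 3 = - 12 * (a 1 3 3) * (a 1 3 3) * (a 2 2 2) + (a 1 2 3) * (a 1 2 3) * (a 2 3 3) + 8 * (a 1 2 2) * (a 1 3 3) * (a 2 3 3) - 12 * (a 1 2 2) * (a 1 2 3) * (a 3 3 3) - 4 * (a 1 1 3) * (a 2 2 3) * (a 2 3 3) + 36 * (a 1 1 3) * (a 2 2 2) * (a 3 3 3) - 4 * (a 1 1 2) * (a 2 3 3) * (a 2 3 3) + 12 * (a 1 1 2) * (a 2 2 3) * (a 3 3 3)" by (simp add: Dc_def)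
lemma Dc_333: "Dc a 3 3 3 = - 4 * (a 1 3 3) * (a 1 3 3) * (a 2 2 3) + 4 * (a 1 2 3) * (a 1 3 3) * (a 2 3 3) - 3 * (a 1 2 3) * (a 1 2 3) * (a 3 3 3) - 4 * (a 1 1 3) * (a 2 3 3) * (a 2 3 3) + 12 * (a 1 1 3) * (a 2 2 3) * (a 3 3 3)" by (simp add: Dc_def)
lemma Tc_1111: "Tc a 1 1 1 1 = - (a 1 2 3) * (a 1 2 3) + 4 * (a 1 2 2) * (a 1 3 3)" by (simp add: Tc_def)
lemma Tc_1112: "Tc a 1 1 1 2 = 12 * (a 1 3 3) * (a 2 2 2) - 4 * (a 1 2 3) * (a 2 2 3) + 4 * (a 1 2 2) * (a 2 3 3)" by (simp add: Tc_def)
lemma Tc_1113: "Tc a 1 1 1 3 = 4 * (a 1 3 3) * (a 2 2 3) - 4 * (a 1 2 3) * (a 2 3 3) + 12 * (a 1 2 2) * (a 3 3 3)" by (simp add: Tc_def)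
lemma Tc_1122: "Tc a 1 1 2 2 = - 4 * (a 2 2 3) * (a 2 2 3) + 12 * (a 2 2 2) * (a 2 3 3)" by (simp add: Tc_def)
lemma Tc_1123: "Tc a 1 1 2 3 = - 4 * (a 2 2 3) * (a 2 3 3) + 36 * (a 2 2 2) * (a 3 3 3)" by (simp add: Tc_def)
lemma Tc_1133: "Tc a 1 1 3 3 = - 4 * (a 2 3 3) * (a 2 3 3) + 12 * (a 2 2 3) * (a 3 3 3)" by (simp add: Tc_def)
lemma Tc_1211: "Tc a 1 2 1 1 = 4 * (a 1 1 3) * (a 1 2 3) - 8 * (a 1 1 2) * (a 1 3 3)" by (simp add: Tc_def)
lemma Tc_1212: "Tc a 1 2 1 2 = 2 * (a 1 2 3) * (a 1 2 3) - 8 * (a 1 2 2) * (a 1 3 3) + 8 * (a 1 1 3) * (a 2 2 3) - 8 * (a 1 1 2) * (a 2 3 3)" by (simp add: Tc_def)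
lemma Tc_1213: "Tc a 1 2 1 3 = 8 * (a 1 1 3) * (a 2 3 3) - 24 * (a 1 1 2) * (a 3 3 3)" by (simp add: Tc_def)
lemma Tc_1222: "Tc a 1 2 2 2 = 4 * (a 1 2 3) * (a 2 2 3) - 8 * (a 1 2 2) * (a 2 3 3)" by (simp add: Tc_def)
lemma Tc_1223: "Tc a 1 2 2 3 = 8 * (a 1 3 3) * (a 2 2 3) - 24 * (a 1 2 2) * (a 3 3 3)" by (simp add: Tc_def)
lemma Tc_1233: "Tc a 1 2 3 3 = 8 * (a 1 3 3) * (a 2 3 3) - 12 * (a 1 2 3) * (a 3 3 3)" by (simp add: Tc_def)
lemma Tc_1311: "Tc a 1 3 1 1 = - 8 * (a 1 1 3) * (a 1 2 2) + 4 * (a 1 1 2) * (a 1 2 3)" by (simp add: Tc_def)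
lemma Tc_1312: "Tc a 1 3 1 2 = - 24 * (a 1 1 3) * (a 2 2 2) + 8 * (a 1 1 2) * (a 2 2 3)" by (simp add: Tc_def)
lemma Tc_1313: "Tc a 1 3 1 3 = 2 * (a 1 2 3) * (a 1 2 3) - 8 * (a 1 2 2) * (a 1 3 3) - 8 * (a 1 1 3) * (a 2 2 3) + 8 * (a 1 1 2) * (a 2 3 3)" by (simp add: Tc_def)
lemma Tc_1322: "Tc a 1 3 2 2 = - 12 * (a 1 2 3) * (a 2 2 2) + 8 * (a 1 2 2) * (a 2 2 3)" by (simp add: Tc_def)
lemma Tc_1323: "Tc a 1 3 2 3 = - 24 * (a 1 3 3) * (a 2 2 2) + 8 * (a 1 2 2) * (a 2 3 3)" by (simp add: Tc_def)
lemma Tc_1333: "Tc a 1 3 3 3 = - 8 * (a 1 3 3) * (a 2 2 3) + 4 * (a 1 2 3) * (a 2 3 3)" by (simp add: Tc_def)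
lemma Tc_2211: "Tc a 2 2 1 1 = - 4 * (a 1 1 3) * (a 1 1 3) + 12 * (a 1 1 1) * (a 1 3 3)" by (simp add: Tc_def)
lemma Tc_2212: "Tc a 2 2 1 2 = - 4 * (a 1 1 3) * (a 1 2 3) + 4 * (a 1 1 2) * (a 1 3 3) + 12 * (a 1 1 1) * (a 2 3 3)" by (simp add: Tc_def)
lemma Tc_2213: "Tc a 2 2 1 3 = - 4 * (a 1 1 3) * (a 1 3 3) + 36 * (a 1 1 1) * (a 3 3 3)" by (simp add: Tc_def)
lemma Tc_2222: "Tc a 2 2 2 2 = - (a 1 2 3) * (a 1 2 3) + 4 * (a 1 1 2) * (a 2 3 3)" by (simp add: Tc_def)
lemma Tc_2223: "Tc a 2 2 2 3 = - 4 * (a 1 2 3) * (a 1 3 3) + 4 * (a 1 1 3) * (a 2 3 3) + 12 * (a 1 1 2) * (a 3 3 3)" by (simp add: Tc_def)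
lemma Tc_2233: "Tc a 2 2 3 3 = - 4 * (a 1 3 3) * (a 1 3 3) + 12 * (a 1 1 3) * (a 3 3 3)" by (simp add: Tc_def)
lemma Tc_2311: "Tc a 2 3 1 1 = 8 * (a 1 1 2) * (a 1 1 3) - 12 * (a 1 1 1) * (a 1 2 3)" by (simp add: Tc_def)
lemma Tc_2312: "Tc a 2 3 1 2 = 8 * (a 1 1 3) * (a 1 2 2) - 24 * (a 1 1 1) * (a 2 2 3)" by (simp add: Tc_def)
lemma Tc_2313: "Tc a 2 3 1 3 = 8 * (a 1 1 2) * (a 1 3 3) - 24 * (a 1 1 1) * (a 2 3 3)" by (simp add: Tc_def)
lemma Tc_2322: "Tc a 2 3 2 2 = 4 * (a 1 2 2) * (a 1 2 3) - 8 * (a 1 1 2) * (a 2 2 3)" by (simp add: Tc_def)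
lemma Tc_2323: "Tc a 2 3 2 3 = 2 * (a 1 2 3) * (a 1 2 3) + 8 * (a 1 2 2) * (a 1 3 3) - 8 * (a 1 1 3) * (a 2 2 3) - 8 * (a 1 1 2) * (a 2 3 3)" by (simp add: Tc_def)
lemma Tc_2333: "Tc a 2 3 3 3 = 4 * (a 1 2 3) * (a 1 3 3) - 8 * (a 1 1 3) * (a 2 3 3)" by (simp add: Tc_def)
lemma Tc_3311: "Tc a 3 3 1 1 = - 4 * (a 1 1 2) * (a 1 1 2) + 12 * (a 1 1 1) * (a 1 2 2)" by (simp add: Tc_def)
lemma Tc_3312: "Tc a 3 3 1 2 = - 4 * (a 1 1 2) * (a 1 2 2) + 36 * (a 1 1 1) * (a 2 2 2)" by (simp add: Tc_def)
lemma Tc_3313: "Tc a 3 3 1 3 = 4 * (a 1 1 3) * (a 1 2 2) - 4 * (a 1 1 2) * (a 1 2 3) + 12 * (a 1 1 1) * (a 2 2 3)" by (simp add: Tc_def)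
lemma Tc_3322: "Tc a 3 3 2 2 = - 4 * (a 1 2 2) * (a 1 2 2) + 12 * (a 1 1 2) * (a 2 2 2)" by (simp add: Tc_def)
lemma Tc_3323: "Tc a 3 3 2 3 = - 4 * (a 1 2 2) * (a 1 2 3) + 12 * (a 1 1 3) * (a 2 2 2) + 4 * (a 1 1 2) * (a 2 2 3)" by (simp add: Tc_def)
lemma Tc_3333: "Tc a 3 3 3 3 = - (a 1 2 3) * (a 1 2 3) + 4 * (a 1 1 3) * (a 2 2 3)" by (simp add: Tc_def)

definition E1 :: "(nat \<Rightarrow> nat \<Rightarrow> nat \<Rightarrow> complex) \<Rightarrow> (nat \<Rightarrow> nat \<Rightarrow> nat \<Rightarrow> nat \<Rightarrow> complex) \<Rightarrow> complex" where
 "E1 D T = D 1 2 2 * T 3 3 1 1 - D 1 1 2 * T 3 3 1 2 + 3 * D 1 1 1 * T 3 3 2 2"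
definition E2 :: "(nat \<Rightarrow> nat \<Rightarrow> nat \<Rightarrow> complex) \<Rightarrow> (nat \<Rightarrow> nat \<Rightarrow> nat \<Rightarrow> nat \<Rightarrow> complex) \<Rightarrow> complex" where
 "E2 D T = 3 * D 2 2 2 * T 3 3 1 1 - D 1 2 2 * T 3 3 1 2 + D 1 1 2 * T 3 3 2 2"
definition E3 :: "(nat \<Rightarrow> nat \<Rightarrow> nat \<Rightarrow> complex) \<Rightarrow> (nat \<Rightarrow> nat \<Rightarrow> nat \<Rightarrow> nat \<Rightarrow> complex) \<Rightarrow> complex" where
 "E3 D T = D 1 2 2 * T 1 3 1 1 - D 1 1 2 * T 1 3 1 2 + 3 * D 1 1 1 * T 1 3 2 2
     + 3 * D 2 2 2 * T 2 3 1 1 - D 1 2 2 * T 2 3 1 2 + D 1 1 2 * T 2 3 2 2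
     - 4 * D 2 2 3 * T 3 3 1 1 + 2 * D 1 2 3 * T 3 3 1 2 - 4 * D 1 1 3 * T 3 3 2 2"
definition ND :: "(nat \<Rightarrow> nat \<Rightarrow> nat \<Rightarrow> nat \<Rightarrow> complex) \<Rightarrow> complex" where
 "ND T = 4 * T 3 3 1 1 * T 3 3 2 2 - (T 3 3 1 2)\<^sup>2"

lemma E_id: "E1 a (Tc a) = 0" "E2 a (Tc a) = 0" "E3 a (Tc a) = 0"
  unfolding E1_def E2_def E3_def Tc_def by (simp; algebra)+

lemma E_pc: "E1 (Dc (pc l1 l2 l3)) (Tc (pc l1 l2 l3)) = 0 \<and> E2 (Dc (pc l1 l2 l3)) (Tc (pc l1 l2 l3)) = 0
  \<and> E3 (Dc (pc l1 l2 l3)) (Tc (pc l1 l2 l3)) = 0"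
proof -
  let ?a = "pc l1 l2 l3" let ?d = "(det3 l1 l2 l3)^2"
  have "E1 (Dc ?a) (Tc ?a) = ?d * E1 ?a (Tc ?a)" "E2 (Dc ?a) (Tc ?a) = ?d * E2 ?a (Tc ?a)"
    "E3 (Dc ?a) (Tc ?a) = ?d * E3 ?a (Tc ?a)"
    unfolding E1_def E2_def E3_def Dc_pc_111 Dc_pc_112 Dc_pc_122 Dc_pc_222 Dc_pc_113 Dc_pc_123 Dc_pc_223
    by (simp_all add: algebra_simps)
  then show ?thesis using E_id by simp
qed

lemma E_diff12:
  assumes "a 1 1 1 = b 1 1 1" "a 1 1 2 = b 1 1 2" "a 1 2 2 = b 1 2 2" "a 2 2 2 = b 2 2 2"
    "a 1 1 3 = b 1 1 3" "a 1 2 3 = b 1 2 3" "a 2 2 3 = b 2 2 3"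
  shows "E1 (Dc a) (Tc a) = E1 (Dc b) (Tc b) + (a 1 3 3 - b 1 3 3) * ND (Tc a)"
    "E2 (Dc a) (Tc a) = E2 (Dc b) (Tc b) + (a 2 3 3 - b 2 3 3) * ND (Tc a)"
  unfolding E1_def E2_def ND_def Dc_111 Dc_112 Dc_122 Dc_222 Tc_3311 Tc_3312 Tc_3322 by (simp only: assms; algebra)+

lemma E_diff3:
  assumes "a 1 1 1 = b 1 1 1" "a 1 1 2 = b 1 1 2" "a 1 2 2 = b 1 2 2" "a 2 2 2 = b 2 2 2"
    "a 1 1 3 = b 1 1 3" "a 1 2 3 = b 1 2 3" "a 2 2 3 = b 2 2 3" "a 1 3 3 = b 1 3 3" "a 2 3 3 = b 2 3 3"
  shows "E3 (Dc a) (Tc a) = E3 (Dc b) (Tc b) - 6 * (a 3 3 3 - b 3 3 3) * ND (Tc a)"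
  unfolding E3_def ND_def Dc_111 Dc_112 Dc_122 Dc_222 Dc_113 Dc_123 Dc_223 Tc_3311 Tc_3312 Tc_3322
    Tc_1311 Tc_1312 Tc_1322 Tc_2311 Tc_2312 Tc_2322 by (simp only: assms) algebra




lemma E_cong:
  assumes "a 1 1 1 = b 1 1 1" "a 1 1 2 = b 1 1 2" "a 1 2 2 = b 1 2 2" "a 2 2 2 = b 2 2 2"
    "a 1 1 3 = b 1 1 3" "a 1 2 3 = b 1 2 3" "a 2 2 3 = b 2 2 3" "a 1 3 3 = b 1 3 3" "a 2 3 3 = b 2 3 3"
    "a 3 3 3 = b 3 3 3"
  shows "E1 (Dc a) (Tc a) = E1 (Dc b) (Tc b)" "E2 (Dc a) (Tc a) = E2 (Dc b) (Tc b)"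
    "E3 (Dc a) (Tc a) = E3 (Dc b) (Tc b)"
  unfolding E1_def E2_def E3_def Dc_111 Dc_112 Dc_122 Dc_222 Dc_113 Dc_123 Dc_223 Tc_3311 Tc_3312 Tc_3322
    Tc_1311 Tc_1312 Tc_1322 Tc_2311 Tc_2312 Tc_2322 by (simp_all only: assms)

lemma reverse:
  assumes e1: "E1 (Dc a) (Tc a) = 0" and e2: "E2 (Dc a) (Tc a) = 0" and e3: "E3 (Dc a) (Tc a) = 0"
    and nd: "ND (Tc a) \<noteq> 0"
  shows "\<exists>l1 l2 l3. \<forall>x. cubic_form a x = cubic_form (pc l1 l2 l3) x"
proof -
  obtain p1 r1 p2 r2 p3 r3 where f: "a 1 1 1 = p1*p2*p3" "a 1 1 2 = p1*p2*r3 + p1*r2*p3 + r1*p2*p3"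
   "a 1 2 2 = p1*r2*r3 + r1*p2*r3 + r1*r2*p3" "a 2 2 2 = r1*r2*r3"
    using cubic_factor[of "a 1 1 1" "a 1 1 2" "a 1 2 2" "a 2 2 2"] by blast
  define b12 where "b12 = p1*r2 - p2*r1"
  define b13 where "b13 = p1*r3 - p3*r1"
  define b23 where "b23 = p2*r3 - p3*r2"
  have "ND (Tc a) = 48 * (b12*b13*b23)^2"
    unfolding ND_def Tc_3311 Tc_3312 Tc_3322 b12_def b13_def b23_def f by algebra
  with nd have nz: "b12 \<noteq> 0" "b13 \<noteq> 0" "b23 \<noteq> 0" by auto
  define h where "h = (\<lambda>X Y. a 1 1 3 * X^2 + a 1 2 3 * X * Y + a 2 2 3 * Y^2)"
  define k1 where "k1 = h r1 (-p1) / (b12*b13)"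
  define k2 where "k2 = h r2 (-p2) / (-(b12*b23))"
  define k3 where "k3 = h r3 (-p3) / (b13*b23)"
  define L1 where "L1 = v3 p1 r1 k1"
  define L2 where "L2 = v3 p2 r2 k2"
  define L3 where "L3 = v3 p3 r3 k3"
  let ?b = "pc L1 L2 L3"
  have s1: "a 1 1 1 = ?b 1 1 1" "a 1 1 2 = ?b 1 1 2" "a 1 2 2 = ?b 1 2 2" "a 2 2 2 = ?b 2 2 2"
    unfolding pc_def L1_def L2_def L3_def f by (simp_all add: algebra_simps)
  have pcv: "pc l1 l2 l3 1 1 3 = l1 1 * l2 1 * l3 3 + l1 1 * l2 3 * l3 1 + l1 3 * l2 1 * l3 1"
    "pc l1 l2 l3 1 2 3 = l1 1 * l2 2 * l3 3 + l1 1 * l2 3 * l3 2 + l1 2 * l2 1 * l3 3 + l1 2 * l2 3 * l3 1 + l1 3 * l2 1 * l3 2 + l1 3 * l2 2 * l3 1"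
    "pc l1 l2 l3 2 2 3 = l1 2 * l2 2 * l3 3 + l1 2 * l2 3 * l3 2 + l1 3 * l2 2 * l3 2" for l1 l2 l3
    by (simp_all add: pc_def)
  have k1: "k1 * (b12*b13) = h r1 (-p1)" unfolding k1_def using nz by simp
  have k2: "k2 * (-(b12*b23)) = h r2 (-p2)" unfolding k2_def using nz by simp
  have k3: "k3 * (b13*b23) = h r3 (-p3)" unfolding k3_def using nz by simp
  have "b12*b13*b23 * (a 1 1 3 - ?b 1 1 3) = 0" "b12*b13*b23 * (a 1 2 3 - ?b 1 2 3) = 0"
     "b12*b13*b23 * (a 2 2 3 - ?b 2 2 3) = 0"
    unfolding pcv L1_def L2_def L3_def v3_app using k1 k2 k3 unfolding h_def b12_def b13_def b23_def
    by algebra+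
  then have s2: "a 1 1 3 = ?b 1 1 3" "a 1 2 3 = ?b 1 2 3" "a 2 2 3 = ?b 2 2 3" using nz by auto
  have z: "E1 (Dc ?b) (Tc ?b) = 0 \<and> E2 (Dc ?b) (Tc ?b) = 0 \<and> E3 (Dc ?b) (Tc ?b) = 0" by (rule E_pc)
  have s3: "a 1 3 3 = ?b 1 3 3" "a 2 3 3 = ?b 2 3 3"
    using E_diff12[OF s1 s2] z e1 e2 nd by auto
  have s4: "a 3 3 3 = ?b 3 3 3"
    using E_diff3[OF s1 s2 s3] z e3 nd by auto
  have "\<forall>x. cubic_form a x = cubic_form ?b x"
    unfolding cubic_expand using s1 s2 s3 s4 by simp
  then show ?thesis by blast
qed




theorem lemma9p1:
  fixes a D :: "nat \<Rightarrow> nat \<Rightarrow> nat \<Rightarrow> complex"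
    and T :: "nat \<Rightarrow> nat \<Rightarrow> nat \<Rightarrow> nat \<Rightarrow> complex"
  assumes hD: "\<forall>x. (1/12) * J2 (cubic_form a) (cubic_form a) (cubic_form a) x = cubic_form D x"
    and hT: "\<forall>u x. (1/4) * J2 (cubic_form a) (cubic_form a) (\<lambda>y. (lin_form u y)\<^sup>2) x = biquad_form T u x"
    and nd: "4 * T 3 3 1 1 * T 3 3 2 2 - (T 3 3 1 2)\<^sup>2 \<noteq> 0"
  shows "completely_reducible (cubic_form a) \<longleftrightarrow>
    (D 1 2 2 * T 3 3 1 1 - D 1 1 2 * T 3 3 1 2 + 3 * D 1 1 1 * T 3 3 2 2 = 0 \<and>
     3 * D 2 2 2 * T 3 3 1 1 - D 1 2 2 * T 3 3 1 2 + D 1 1 2 * T 3 3 2 2 = 0 \<and>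
     D 1 2 2 * T 1 3 1 1 - D 1 1 2 * T 1 3 1 2 + 3 * D 1 1 1 * T 1 3 2 2
     + 3 * D 2 2 2 * T 2 3 1 1 - D 1 2 2 * T 2 3 1 2 + D 1 1 2 * T 2 3 2 2
     - 4 * D 2 2 3 * T 3 3 1 1 + 2 * D 1 2 3 * T 3 3 1 2 - 4 * D 1 1 3 * T 3 3 2 2 = 0)"
proof -
  have "\<forall>x. cubic_form D x = cubic_form (Dc a) x" using hD J2_fff by metis
  note DD = cubic_uniq[OF this]
  have TT0: "\<forall>u x. biquad_form T u x = biquad_form (Tc a) u x" using hT J2_ffu by metis
  note T11 = biquad_uniq[OF TT0, of 1 1, simplified]
  note T12 = biquad_uniq[OF TT0, of 1 2, simplified]
  note T22 = biquad_uniq[OF TT0, of 2 2, simplified]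
  have eqs: "(D 1 2 2 * T 3 3 1 1 - D 1 1 2 * T 3 3 1 2 + 3 * D 1 1 1 * T 3 3 2 2) = E1 (Dc a) (Tc a)"
    "(3 * D 2 2 2 * T 3 3 1 1 - D 1 2 2 * T 3 3 1 2 + D 1 1 2 * T 3 3 2 2) = E2 (Dc a) (Tc a)"
    "(D 1 2 2 * T 1 3 1 1 - D 1 1 2 * T 1 3 1 2 + 3 * D 1 1 1 * T 1 3 2 2
     + 3 * D 2 2 2 * T 2 3 1 1 - D 1 2 2 * T 2 3 1 2 + D 1 1 2 * T 2 3 2 2
     - 4 * D 2 2 3 * T 3 3 1 1 + 2 * D 1 2 3 * T 3 3 1 2 - 4 * D 1 1 3 * T 3 3 2 2) = E3 (Dc a) (Tc a)"
    "4 * T 3 3 1 1 * T 3 3 2 2 - (T 3 3 1 2)\<^sup>2 = ND (Tc a)"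
    unfolding E1_def E2_def E3_def ND_def using DD T11 T12 T22 by simp_all
  show ?thesis unfolding eqs
  proof
    assume "completely_reducible (cubic_form a)"
    then obtain l1 l2 l3 where "\<forall>x. cubic_form a x = lin_form l1 x * lin_form l2 x * lin_form l3 x"
      unfolding completely_reducible_def by blast
    then have "\<forall>x. cubic_form a x = cubic_form (pc l1 l2 l3) x" by (simp add: pc_prod)
    note A = cubic_uniq[OF this]
    have "E1 (Dc a) (Tc a) = E1 (Dc (pc l1 l2 l3)) (Tc (pc l1 l2 l3))"
      "E2 (Dc a) (Tc a) = E2 (Dc (pc l1 l2 l3)) (Tc (pc l1 l2 l3))"
      "E3 (Dc a) (Tc a) = E3 (Dc (pc l1 l2 l3)) (Tc (pc l1 l2 l3))"
      using A by (intro E_cong; simp)+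
    then show "E1 (Dc a) (Tc a) = 0 \<and> E2 (Dc a) (Tc a) = 0 \<and> E3 (Dc a) (Tc a) = 0"
      using E_pc by simp
  next
    assume "E1 (Dc a) (Tc a) = 0 \<and> E2 (Dc a) (Tc a) = 0 \<and> E3 (Dc a) (Tc a) = 0"
    then obtain l1 l2 l3 where "\<forall>x. cubic_form a x = cubic_form (pc l1 l2 l3) x"
      using reverse nd eqs(4) by metis
    then show "completely_reducible (cubic_form a)"
      unfolding completely_reducible_def by (metis pc_prod)
  qed
qed


end
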